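(* Let $\varepsilon>0$, $t\ge3$, and let $\mathcal A\ne\vec0$ be a super-assignment over $\mathbf{PL}(\mathbb F^t)$ with degree bound $d$ (an integer $\mathcal A_{\mathcal P}[f]$ for each affine plane $\mathcal P$ and each $f\in\mathcal P_{\le d}$). Suppose $\mathcal A$ satisfies the weak Plane-vs-Plane constraints and $|\mathrm{supp}(\mathcal P)|\le|\mathbb F|^{\varepsilon}$ for every plane $\mathcal P$. Then the fraction of planes $\mathcal P\in\mathbf{PL}(\mathbb F^t)$ with $\mathcal A_{\mathcal P}=\vec0$ is at most $(d+3)|\mathbb F|^{-1+\varepsilon}$.
   Context: $\mathbf{PL}(\mathbb F^t)$ is the set of affine planes of $\mathbb F^t$. For a plane $\mathcal P=\alpha+\mathrm{Span}(x,y)$, $\mathcal P_{\le d}$ is the set of functions $\mathcal P\to\mathbb F$ that are polynomials of total degree at most $d$ in the affine coordinates of $\mathcal P$. $\mathcal A_{\mathcal P}$ denotes the vector $(\mathcal A_{\mathcal P}[f])_{f\in\mathcal P_{\le d}}$, and $\mathrm{supp}(\mathcal P)=\{f:\mathcal A_{\mathcal P}[f]\ne0\}$. Weak Plane-vs-Plane constraints: for every two planes $\mathcal P_1,\mathcal P_2$ intersecting in an affine line $\ell$, every $x\in\ell$ and every $a\in\mathbb F$, $\sum_{f\in(\mathcal P_1)_{\le d}:f(x)=a}\mathcal A_{\mathcal P_1}[f]=\sum_{f\in(\mathcal P_2)_{\le d}:f(x)=a}\mathcal A_{\mathcal P_2}[f]$. *)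

theory Defs
  imports Complex_Main
begin

text \<open>Points of F^t are functions 'n \<Rightarrow> 'a with 'n a finite index type, CARD('n) = t.\<close>

definition indep2 :: "('n \<Rightarrow> 'a::field) \<Rightarrow> ('n \<Rightarrow> 'a) \<Rightarrow> bool" where
  "indep2 x y \<longleftrightarrow> (\<forall>a b. (\<forall>i. a * x i + b * y i = 0) \<longrightarrow> a = 0 \<and> b = 0)"

definition plane_of :: "('n \<Rightarrow> 'a::field) \<Rightarrow> ('n \<Rightarrow> 'a) \<Rightarrow> ('n \<Rightarrow> 'a) \<Rightarrow> ('n \<Rightarrow> 'a) set" where
  "plane_of \<alpha> x y = {(\<lambda>i. \<alpha> i + a * x i + b * y i) | a b. True}"

definition affine_planes :: "('n \<Rightarrow> 'a::field) set set" where
  "affine_planes = {P. \<exists>\<alpha> x y. indep2 x y \<and> P = plane_of \<alpha> x y}"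

definition is_affine_line :: "('n \<Rightarrow> 'a::field) set \<Rightarrow> bool" where
  "is_affine_line L \<longleftrightarrow> (\<exists>\<alpha> x. (\<exists>i. x i \<noteq> 0) \<and> L = {(\<lambda>i. \<alpha> i + a * x i) | a. True})"

text \<open>P_{<=d}: functions on the plane P (extended by 0 outside P) that are polynomials of total
 degree at most d in affine coordinates of P.\<close>
definition low_deg :: "nat \<Rightarrow> ('n \<Rightarrow> 'a::field) set \<Rightarrow> (('n \<Rightarrow> 'a) \<Rightarrow> 'a) set" where
  "low_deg d P = {f. (\<exists>\<alpha> x y c. indep2 x y \<and> P = plane_of \<alpha> x y
      \<and> (\<forall>i j. d < i + j \<longrightarrow> c i j = 0)
      \<and> (\<forall>a b. f (\<lambda>i. \<alpha> i + a * x i + b * y i) = (\<Sum>i\<le>d. \<Sum>j\<le>d. c i j * a ^ i * b ^ j)))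
      \<and> (\<forall>v. v \<notin> P \<longrightarrow> f v = 0)}"

definition supp :: "nat \<Rightarrow> (('n \<Rightarrow> 'a::field) set \<Rightarrow> (('n \<Rightarrow> 'a) \<Rightarrow> 'a) \<Rightarrow> int) \<Rightarrow> ('n \<Rightarrow> 'a) set \<Rightarrow> (('n \<Rightarrow> 'a) \<Rightarrow> 'a) set" where
  "supp d A P = {f \<in> low_deg d P. A P f \<noteq> 0}"

definition weak_PvP :: "nat \<Rightarrow> (('n \<Rightarrow> 'a::field) set \<Rightarrow> (('n \<Rightarrow> 'a) \<Rightarrow> 'a) \<Rightarrow> int) \<Rightarrow> bool" where
  "weak_PvP d A \<longleftrightarrow> (\<forall>P1 \<in> affine_planes. \<forall>P2 \<in> affine_planes. is_affine_line (P1 \<inter> P2) \<longrightarrow>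
     (\<forall>x \<in> P1 \<inter> P2. \<forall>a.
        (\<Sum>f \<in> {f \<in> low_deg d P1. f x = a}. A P1 f) = (\<Sum>f \<in> {f \<in> low_deg d P2. f x = a}. A P2 f)))"

end

theory Submission
  imports Defs "HOL-Computational_Algebra.Polynomial"
begin

definition lineof :: "('n \<Rightarrow> 'a::field) \<Rightarrow> ('n \<Rightarrow> 'a) \<Rightarrow> ('n \<Rightarrow> 'a) set" where
  "lineof \<beta> w = {(\<lambda>i. \<beta> i + s * w i) | s. True}"

lemma plane_ofI: "(\<lambda>i. \<alpha> i + a * x i + b * y i) \<in> plane_of \<alpha> x y"
  unfolding plane_of_def by blast

lemma plane_ofE: "p \<in> plane_of \<alpha> x y \<Longrightarrow> \<exists>a b. p = (\<lambda>i. \<alpha> i + a * x i + b * y i)"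
  unfolding plane_of_def by blast

lemma lineofI: "(\<lambda>i. \<beta> i + s * w i) \<in> lineof \<beta> w"
  unfolding lineof_def by blast

lemma lineofE: "p \<in> lineof \<beta> w \<Longrightarrow> \<exists>s. p = (\<lambda>i. \<beta> i + s * w i)"
  unfolding lineof_def by blast

lemma indep2D: "indep2 x y \<Longrightarrow> (\<forall>i. a * x i + b * y i = 0) \<Longrightarrow> a = 0 \<and> b = 0"
  unfolding indep2_def by blast

lemma indep2_inj:
  assumes "indep2 x y" "(\<lambda>i. \<alpha> i + a * x i + b * y i) = (\<lambda>i. \<alpha> i + a' * x i + b' * y i)"
  shows "a = a' \<and> b = b'"
proof -
  have "\<forall>i. (a - a') * x i + (b - b') * y i = 0"
  proof
    fix i
    have "\<alpha> i + a * x i + b * y i = \<alpha> i + a' * x i + b' * y i" using assms(2) by meson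
    then show "(a - a') * x i + (b - b') * y i = 0" by (simp add: algebra_simps)
  qed
  then have "a - a' = 0 \<and> b - b' = 0" using assms(1) unfolding indep2_def by blast
  then show ?thesis by simp
qed

lemma plane_image: "plane_of \<alpha> x y = (\<lambda>(a,b). (\<lambda>i. \<alpha> i + a * x i + b * y i)) ` UNIV"
  unfolding plane_of_def by auto

lemma card_plane:
  fixes x y :: "'n \<Rightarrow> 'a::{finite,field}"
  assumes "indep2 x y"
  shows "card (plane_of \<alpha> x y) = card (UNIV :: 'a set)^2"
proof -
  have "inj_on (\<lambda>(a,b). (\<lambda>i. \<alpha> i + a * x i + b * y i)) (UNIV :: ('a \<times> 'a) set)"
    using indep2_inj[OF assms] by (auto simp: inj_on_def)
  then have "card (plane_of \<alpha> x y) = card (UNIV :: ('a \<times> 'a) set)"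
    unfolding plane_image by (rule card_image)
  also have "\<dots> = card (UNIV :: 'a set)^2" by (metis UNIV_Times_UNIV card_cartesian_product power2_eq_square)
  finally show ?thesis .
qed

lemma plane_affine:
  assumes "p1 \<in> plane_of \<alpha> x y" "p2 \<in> plane_of \<alpha> x y" "p3 \<in> plane_of \<alpha> x y"
  shows "(\<lambda>i. p1 i + s * (p2 i - p1 i) + r * (p3 i - p1 i)) \<in> plane_of \<alpha> x y"
proof -
  obtain a1 b1 where 1: "p1 = (\<lambda>i. \<alpha> i + a1 * x i + b1 * y i)" using plane_ofE[OF assms(1)] by blast
  obtain a2 b2 where 2: "p2 = (\<lambda>i. \<alpha> i + a2 * x i + b2 * y i)" using plane_ofE[OF assms(2)] by blast
  obtain a3 b3 where 3: "p3 = (\<lambda>i. \<alpha> i + a3 * x i + b3 * y i)" using plane_ofE[OF assms(3)] by blast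
  have "(\<lambda>i. p1 i + s * (p2 i - p1 i) + r * (p3 i - p1 i)) =
     (\<lambda>i. \<alpha> i + (a1 + s * (a2 - a1) + r * (a3 - a1)) * x i + (b1 + s * (b2 - b1) + r * (b3 - b1)) * y i)"
  proof
    fix i show "p1 i + s * (p2 i - p1 i) + r * (p3 i - p1 i) =
     \<alpha> i + (a1 + s * (a2 - a1) + r * (a3 - a1)) * x i + (b1 + s * (b2 - b1) + r * (b3 - b1)) * y i"
      unfolding 1 2 3 by algebra
  qed
  then show ?thesis by (simp only: plane_ofI)
qed

lemma rebase:
  assumes "z \<in> plane_of \<alpha> x y"
  shows "plane_of z x y = plane_of \<alpha> x y"
proof -
  obtain a0 b0 where z: "z = (\<lambda>i. \<alpha> i + a0 * x i + b0 * y i)" using plane_ofE[OF assms] by blast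
  show ?thesis
  proof
    show "plane_of z x y \<subseteq> plane_of \<alpha> x y"
    proof
      fix p assume "p \<in> plane_of z x y"
      then obtain a b where p: "p = (\<lambda>i. z i + a * x i + b * y i)" using plane_ofE by blast
      have "p = (\<lambda>i. \<alpha> i + (a0 + a) * x i + (b0 + b) * y i)" unfolding p z by (rule ext) algebra
      then show "p \<in> plane_of \<alpha> x y" by (simp only: plane_ofI)
    qed
    show "plane_of \<alpha> x y \<subseteq> plane_of z x y"
    proof
      fix p assume "p \<in> plane_of \<alpha> x y"
      then obtain a b where p: "p = (\<lambda>i. \<alpha> i + a * x i + b * y i)" using plane_ofE by blast
      have "p = (\<lambda>i. z i + (a - a0) * x i + (b - b0) * y i)" unfolding p z by (rule ext) algebra
      then show "p \<in> plane_of z x y" by (simp only: plane_ofI)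
    qed
  qed
qed

lemma affine_planesE:
  assumes "P \<in> affine_planes"
  obtains \<alpha> x y where "indep2 x y" "P = plane_of \<alpha> x y"
  using assms unfolding affine_planes_def by blast

lemma affine_planesI: "indep2 x y \<Longrightarrow> plane_of \<alpha> x y \<in> affine_planes"
  unfolding affine_planes_def by blast

lemma card_affine_plane:
  "P \<in> (affine_planes :: ('n \<Rightarrow> 'a::{finite,field}) set set) \<Longrightarrow> card P = card (UNIV :: 'a set)^2"
  by (erule affine_planesE) (simp add: card_plane)

lemma plane_rebase:
  assumes "P \<in> affine_planes" "z \<in> P"
  obtains x y where "indep2 x y" "P = plane_of z x y"
proof -
  obtain \<alpha> x y where "indep2 x y" "P = plane_of \<alpha> x y" using assms(1) by (rule affine_planesE)
  then show ?thesis using that[of x y] rebase[of z \<alpha> x y] assms(2) by simp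
qed

lemma plane_affine':
  assumes "P \<in> affine_planes" "p1 \<in> P" "p2 \<in> P" "p3 \<in> P"
  shows "(\<lambda>i. p1 i + s * (p2 i - p1 i) + r * (p3 i - p1 i)) \<in> P"
proof -
  obtain \<alpha> x y where "indep2 x y" "P = plane_of \<alpha> x y" using assms(1) by (rule affine_planesE)
  then show ?thesis using plane_affine assms(2-4) by simp
qed

lemma line_in_plane:
  assumes "P \<in> affine_planes" "p1 \<in> P" "p2 \<in> P"
  shows "lineof p1 (\<lambda>i. p2 i - p1 i) \<subseteq> P"
proof
  fix p assume "p \<in> lineof p1 (\<lambda>i. p2 i - p1 i)"
  then obtain s where p: "p = (\<lambda>i. p1 i + s * (p2 i - p1 i))" using lineofE by blast
  have "p = (\<lambda>i. p1 i + s * (p2 i - p1 i) + 0 * (p2 i - p1 i))" unfolding p by simp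
  then show "p \<in> P" using plane_affine'[OF assms(1,2,3,3), of s 0] by simp
qed

lemma indep_offline:
  assumes "w i0 \<noteq> 0" "z \<notin> lineof \<beta> w"
  shows "indep2 w (\<lambda>i. z i - \<beta> i)"
  unfolding indep2_def
proof (intro allI impI)
  fix a b :: 'a
  assume h: "\<forall>i. a * w i + b * (z i - \<beta> i) = 0"
  have "b = 0"
  proof (rule ccontr)
    assume "b \<noteq> 0"
    have "z = (\<lambda>i. \<beta> i + (- a / b) * w i)"
    proof
      fix i
      have "a * w i + b * (z i - \<beta> i) = 0" using h by blast
      then have "b * (z i - \<beta> i) = - (a * w i)" by (simp add: add_eq_0_iff)
      then have "z i - \<beta> i = - (a * w i) / b" using \<open>b \<noteq> 0\<close> by (simp add: field_simps)
      then show "z i = \<beta> i + (- a / b) * w i" by (simp add: field_simps)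
    qed
    then show False using assms(2) lineofI[of \<beta> "- a / b" w] by simp
  qed
  moreover have "a = 0" using h[rule_format, of i0] \<open>b = 0\<close> assms(1) by simp
  ultimately show "a = 0 \<and> b = 0" by simp
qed


lemma L1:
  fixes P P' :: "('n::finite \<Rightarrow> 'a::{finite,field}) set"
  assumes "P \<in> affine_planes" "P' \<in> affine_planes" "P \<noteq> P'" "w i0 \<noteq> 0"
    "lineof \<beta> w \<subseteq> P" "lineof \<beta> w \<subseteq> P'"
  shows "P \<inter> P' = lineof \<beta> w"
proof
  show "lineof \<beta> w \<subseteq> P \<inter> P'" using assms by blast
  show "P \<inter> P' \<subseteq> lineof \<beta> w"
  proof
    fix z assume z: "z \<in> P \<inter> P'"
    show "z \<in> lineof \<beta> w"
    proof (rule ccontr)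
      assume nz: "z \<notin> lineof \<beta> w"
      have ind: "indep2 w (\<lambda>i. z i - \<beta> i)" by (rule indep_offline[OF assms(4) nz])
      let ?S = "plane_of \<beta> w (\<lambda>i. z i - \<beta> i)"
      have b: "\<beta> \<in> lineof \<beta> w" using lineofI[of \<beta> 0 w] by simp
      have b1: "(\<lambda>i. \<beta> i + w i) \<in> lineof \<beta> w" using lineofI[of \<beta> 1 w] by simp
      have sub: "?S \<subseteq> Q" if "Q \<in> affine_planes" "lineof \<beta> w \<subseteq> Q" "z \<in> Q" for Q
      proof
        fix p assume "p \<in> ?S"
        then obtain a b where p: "p = (\<lambda>i. \<beta> i + a * w i + b * (z i - \<beta> i))" using plane_ofE by blast
        have "p = (\<lambda>i. \<beta> i + a * ((\<beta> i + w i) - \<beta> i) + b * (z i - \<beta> i))" unfolding p by simp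
        then show "p \<in> Q" using plane_affine'[OF that(1), of \<beta> "\<lambda>i. \<beta> i + w i" z a b] that b b1 by auto
      qed
      have eq: "?S = Q" if "Q \<in> affine_planes" "lineof \<beta> w \<subseteq> Q" "z \<in> Q" for Q
        using card_subset_eq[OF _ sub[OF that]] card_plane[OF ind] card_affine_plane[OF that(1)] by simp
      have "P = P'" using eq[of P] eq[of P'] assms z by blast
      then show False using assms(3) by simp
    qed
  qed
qed

definition mu :: "nat \<Rightarrow> (('n \<Rightarrow> 'a::field) set \<Rightarrow> (('n \<Rightarrow> 'a) \<Rightarrow> 'a) \<Rightarrow> int) \<Rightarrow> ('n \<Rightarrow> 'a) set \<Rightarrow> ('n \<Rightarrow> 'a) \<Rightarrow> 'a \<Rightarrow> int" where
  "mu d A P y a = (\<Sum>f \<in> {f \<in> low_deg d P. f y = a}. A P f)"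

lemma lineof_is_line: "w i0 \<noteq> 0 \<Longrightarrow> is_affine_line (lineof \<beta> w)"
  unfolding is_affine_line_def lineof_def by blast

lemma SL:
  fixes P P' :: "('n::finite \<Rightarrow> 'a::{finite,field}) set"
  assumes "weak_PvP d A" "P \<in> affine_planes" "P' \<in> affine_planes" "w k \<noteq> 0"
    "lineof \<beta> w \<subseteq> P" "lineof \<beta> w \<subseteq> P'" "y \<in> lineof \<beta> w"
  shows "mu d A P y = mu d A P' y"
proof (cases "P = P'")
  case True then show ?thesis by simp
next
  case False
  have I: "P \<inter> P' = lineof \<beta> w" by (rule L1[OF assms(2,3) False assms(4,5,6)])
  then have L: "is_affine_line (P \<inter> P')" using lineof_is_line[of w k \<beta>, OF assms(4)] by simp
  have Y: "y \<in> P \<inter> P'" using I assms(7) by simp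
  note W = assms(1)[unfolded weak_PvP_def, rule_format, OF assms(2,3) L Y]
  show ?thesis unfolding mu_def
  proof
    fix a show "(\<Sum>f \<in> {f \<in> low_deg d P. f y = a}. A P f) = (\<Sum>f \<in> {f \<in> low_deg d P'. f y = a}. A P' f)"
      by (rule W)
  qed
qed

lemma indep2_nz1: assumes "indep2 x y" shows "\<exists>i. x i \<noteq> 0"
proof (rule ccontr)
  assume "\<not> (\<exists>i. x i \<noteq> 0)"
  then have "\<forall>i. 1 * x i + 0 * y i = 0" by simp
  then show False using indep2D[OF assms, of 1 0] by simp
qed

lemma indep2_nz2: assumes "indep2 x y" shows "\<exists>i. y i \<noteq> 0"
proof (rule ccontr)
  assume "\<not> (\<exists>i. y i \<noteq> 0)"
  then have "\<forall>i. 0 * x i + 1 * y i = 0" by simp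
  then show False using indep2D[OF assms, of 0 1] by simp
qed

lemma indep_choose:
  assumes "indep2 v1 v2" "u i0 \<noteq> 0"
  shows "indep2 u v1 \<or> indep2 u v2"
proof (rule ccontr)
  assume "\<not> (indep2 u v1 \<or> indep2 u v2)"
  then obtain a b a' b' where h1: "\<forall>i. a * u i + b * v1 i = 0" "\<not> (a = 0 \<and> b = 0)"
    and h2: "\<forall>i. a' * u i + b' * v2 i = 0" "\<not> (a' = 0 \<and> b' = 0)"
    unfolding indep2_def by blast
  have "b \<noteq> 0" using h1(1)[rule_format, of i0] h1(2) assms(2) by auto
  have "b' \<noteq> 0" using h2(1)[rule_format, of i0] h2(2) assms(2) by auto
  have "a \<noteq> 0"
  proof
    assume "a = 0"
    then have "\<forall>i. 1 * v1 i + 0 * v2 i = 0" using h1 \<open>b \<noteq> 0\<close> by simp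
    then show False using indep2D[OF assms(1), of 1 0] by simp
  qed
  have "\<forall>i. (a' * b) * v1 i + (- (a * b')) * v2 i = 0"
  proof
    fix i
    have e1: "b * v1 i = - (a * u i)" using h1(1) by (simp add: add_eq_0_iff)
    have e2: "b' * v2 i = - (a' * u i)" using h2(1) by (simp add: add_eq_0_iff)
    have "(a' * b) * v1 i + (- (a * b')) * v2 i = a' * (b * v1 i) - a * (b' * v2 i)" by (simp add: algebra_simps)
    also have "\<dots> = 0" unfolding e1 e2 by (simp add: algebra_simps)
    finally show "(a' * b) * v1 i + (- (a * b')) * v2 i = 0" .
  qed
  then have "a * b' = 0" using indep2D[OF assms(1), of "a' * b" "- (a * b')"] by simp
  then show False using \<open>a \<noteq> 0\<close> \<open>b' \<noteq> 0\<close> by simp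
qed

lemma line_sub_plane1: "lineof z u \<subseteq> plane_of z u v"
proof
  fix p assume "p \<in> lineof z u"
  then obtain s where "p = (\<lambda>i. z i + s * u i)" using lineofE by blast
  then have "p = (\<lambda>i. z i + s * u i + 0 * v i)" by simp
  then show "p \<in> plane_of z u v" by (simp only: plane_ofI)
qed

lemma line_sub_plane2: "lineof z v \<subseteq> plane_of z u v"
proof
  fix p assume "p \<in> lineof z v"
  then obtain s where "p = (\<lambda>i. z i + s * v i)" using lineofE by blast
  then have "p = (\<lambda>i. z i + 0 * u i + s * v i)" by simp
  then show "p \<in> plane_of z u v" by (simp only: plane_ofI)
qed

lemma base_in_line: "z \<in> lineof z u"
  using lineofI[of z 0 u] by simp

lemma chain:
  fixes P0 Q :: "('n::finite \<Rightarrow> 'a::{finite,field}) set"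
  assumes "weak_PvP d A" "P0 \<in> affine_planes" "Q \<in> affine_planes" "x0 \<in> P0" "x0 \<in> Q"
  shows "mu d A Q x0 = mu d A P0 x0"
proof -
  obtain u1 u2 where u: "indep2 u1 u2" "P0 = plane_of x0 u1 u2" using plane_rebase[OF assms(2,4)] by blast
  obtain v1 v2 where v: "indep2 v1 v2" "Q = plane_of x0 v1 v2" using plane_rebase[OF assms(3,5)] by blast
  obtain i0 where i0: "u1 i0 \<noteq> 0" using indep2_nz1[OF u(1)] by blast
  obtain v where vv: "indep2 u1 v" "lineof x0 v \<subseteq> Q"
    using indep_choose[of v1 v2 u1 i0, OF v(1) i0] v(2) line_sub_plane1 line_sub_plane2 by blast
  obtain j0 where j0: "v j0 \<noteq> 0" using indep2_nz2[OF vv(1)] by blast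
  let ?R = "plane_of x0 u1 v"
  have R: "?R \<in> affine_planes" using affine_planesI[OF vv(1)] .
  have "mu d A P0 x0 = mu d A ?R x0"
    by (rule SL[where w=u1 and k=i0 and \<beta>=x0, OF assms(1,2) R i0 _ line_sub_plane1 base_in_line]) (simp add: u(2) line_sub_plane1)
  also have "\<dots> = mu d A Q x0"
    by (rule SL[where w=v and k=j0 and \<beta>=x0, OF assms(1) R assms(3) j0 line_sub_plane2 vv(2) base_in_line])
  finally show ?thesis by simp
qed

lemma deg_term:
  fixes c :: "'a::field"
  assumes "i + j \<le> d"
  shows "degree (smult c ([:a0, u:] ^ i * [:b0, v:] ^ j)) \<le> d"
proof -
  have "degree (smult c ([:a0, u:] ^ i * [:b0, v:] ^ j)) \<le> degree ([:a0, u:] ^ i * [:b0, v:] ^ j)"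
    by (rule degree_smult_le)
  also have "\<dots> \<le> degree ([:a0, u:] ^ i) + degree ([:b0, v:] ^ j)" by (rule degree_mult_le)
  also have "\<dots> \<le> degree [:a0, u:] * i + degree [:b0, v:] * j"
    by (intro add_mono degree_power_le)
  also have "\<dots> \<le> 1 * i + 1 * j"
    by (intro add_mono mult_right_mono) (auto simp: degree_pCons_eq_if)
  finally show ?thesis using assms by simp
qed

lemma line_poly:
  fixes f :: "('n \<Rightarrow> 'a::field) \<Rightarrow> 'a"
  assumes "f \<in> low_deg d Q" "\<beta> \<in> Q" "(\<lambda>i. \<beta> i + w i) \<in> Q"
  shows "\<exists>p. degree p \<le> d \<and> (\<forall>s. f (\<lambda>i. \<beta> i + s * w i) = poly p s)"
proof -
  obtain \<alpha> x y c where h: "indep2 x y" "Q = plane_of \<alpha> x y" "\<forall>i j. d < i + j \<longrightarrow> c i j = 0"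
    "\<forall>a b. f (\<lambda>i. \<alpha> i + a * x i + b * y i) = (\<Sum>i\<le>d. \<Sum>j\<le>d. c i j * a ^ i * b ^ j)"
    using assms(1) unfolding low_deg_def by blast
  obtain a0 b0 where 0: "\<beta> = (\<lambda>i. \<alpha> i + a0 * x i + b0 * y i)" using plane_ofE assms(2) h(2) by blast
  obtain a1 b1 where 1: "(\<lambda>i. \<beta> i + w i) = (\<lambda>i. \<alpha> i + a1 * x i + b1 * y i)"
    using plane_ofE assms(3) h(2) by blast
  define u where "u = a1 - a0"
  define v where "v = b1 - b0"
  define p where "p = (\<Sum>i\<le>d. \<Sum>j\<le>d. smult (c i j) ([:a0, u:] ^ i * [:b0, v:] ^ j))"
  have pt: "(\<lambda>i. \<beta> i + s * w i) = (\<lambda>i. \<alpha> i + (a0 + s * u) * x i + (b0 + s * v) * y i)" for s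
  proof
    fix i
    have e0: "\<beta> i = \<alpha> i + a0 * x i + b0 * y i" using 0 by meson
    have e1: "\<beta> i + w i = \<alpha> i + a1 * x i + b1 * y i" using 1 by meson
    show "\<beta> i + s * w i = \<alpha> i + (a0 + s * u) * x i + (b0 + s * v) * y i"
      unfolding u_def v_def using e0 e1 by algebra
  qed
  have "f (\<lambda>i. \<beta> i + s * w i) = poly p s" for s
    unfolding pt p_def by (simp add: h(4) poly_sum mult.assoc)
  moreover have "degree p \<le> d"
    unfolding p_def
  proof (intro degree_sum_le)
    fix i j assume "i \<in> {..d}" "j \<in> {..d}"
    show "degree (smult (c i j) ([:a0, u:] ^ i * [:b0, v:] ^ j)) \<le> d"
    proof (cases "i + j \<le> d")
      case True then show ?thesis by (rule deg_term)
    next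
      case False then show ?thesis using h(3) by simp
    qed
  qed auto
  ultimately show ?thesis by blast
qed

lemma agree_line:
  fixes f g :: "('n \<Rightarrow> 'a::field) \<Rightarrow> 'a"
  assumes "f \<in> low_deg d Q" "g \<in> low_deg d Q" "\<beta> \<in> Q" "(\<lambda>i. \<beta> i + w i) \<in> Q" "f \<beta> \<noteq> g \<beta>"
  shows "card {s. f (\<lambda>i. \<beta> i + s * w i) = g (\<lambda>i. \<beta> i + s * w i)} \<le> d"
proof -
  obtain pf where pf: "degree pf \<le> d" "\<forall>s. f (\<lambda>i. \<beta> i + s * w i) = poly pf s"
    using line_poly[OF assms(1,3,4)] by blast
  obtain pg where pg: "degree pg \<le> d" "\<forall>s. g (\<lambda>i. \<beta> i + s * w i) = poly pg s"
    using line_poly[OF assms(2,3,4)] by blast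
  have b0: "(\<lambda>i. \<beta> i + 0 * w i) = \<beta>" by simp
  have "poly (pf - pg) 0 \<noteq> 0" using pf(2) pg(2) assms(5) b0 by (metis poly_diff right_minus_eq)
  then have nz: "pf - pg \<noteq> 0" by auto
  have "{s. f (\<lambda>i. \<beta> i + s * w i) = g (\<lambda>i. \<beta> i + s * w i)} = {s. poly (pf - pg) s = 0}"
    using pf(2) pg(2) by auto
  also have "card \<dots> \<le> degree (pf - pg)" by (rule card_poly_roots_bound[OF nz])
  also have "\<dots> \<le> d" using degree_diff_le_max[of pf pg] pf(1) pg(1) by simp
  finally show ?thesis .
qed


lemma low_deg_out: "f \<in> low_deg d Q \<Longrightarrow> v \<notin> Q \<Longrightarrow> f v = 0"
  unfolding low_deg_def by blast

lemma Eg: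
  fixes f g :: "('n::finite \<Rightarrow> 'a::{finite,field}) \<Rightarrow> 'a"
  assumes "Q \<in> affine_planes" "f \<in> low_deg d Q" "g \<in> low_deg d Q" "f \<noteq> g"
  shows "card {y \<in> Q. g y = f y} \<le> d * (card (UNIV :: 'a set) + 1)"
proof -
  obtain z where z: "f z \<noteq> g z" using assms(4) by blast
  have zQ: "z \<in> Q"
  proof (rule ccontr)
    assume "z \<notin> Q"
    then have "f z = 0" "g z = 0" using low_deg_out[OF assms(2)] low_deg_out[OF assms(3)] by auto
    then show False using z by simp
  qed
  obtain x y where xy: "indep2 x y" "Q = plane_of z x y" using plane_rebase[OF assms(1) zQ] by blast
  define S where "S r = {s. f (\<lambda>i. z i + s * (x i + r * y i)) = g (\<lambda>i. z i + s * (x i + r * y i))}" for r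
  define T where "T = {s. f (\<lambda>i. z i + s * y i) = g (\<lambda>i. z i + s * y i)}"
  have S: "card (S r) \<le> d" for r
  proof -
    have "(\<lambda>i. z i + 1 * x i + r * y i) \<in> Q" using xy(2) by (simp only: plane_ofI)
    then have mem: "(\<lambda>i. z i + (x i + r * y i)) \<in> Q" by (simp add: add.assoc)
    show ?thesis unfolding S_def
      by (rule agree_line[where w="\<lambda>i. x i + r * y i", OF assms(2,3) zQ mem z])
  qed
  have T: "card T \<le> d"
  proof -
    have "(\<lambda>i. z i + 0 * x i + 1 * y i) \<in> Q" using xy(2) by (simp only: plane_ofI)
    then have mem: "(\<lambda>i. z i + y i) \<in> Q" by simp
    show ?thesis unfolding T_def
      by (rule agree_line[where w="y", OF assms(2,3) zQ mem z])
  qed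
  have sub: "{y \<in> Q. g y = f y} \<subseteq> (\<Union>r. (\<lambda>s. (\<lambda>i. z i + s * (x i + r * y i))) ` S r) \<union> (\<lambda>s. (\<lambda>i. z i + s * y i)) ` T"
  proof
    fix p assume p: "p \<in> {y \<in> Q. g y = f y}"
    then have gp: "g p = f p" by simp
    from p obtain a b where pab: "p = (\<lambda>i. z i + a * x i + b * y i)" using xy(2) plane_ofE by blast
    show "p \<in> (\<Union>r. (\<lambda>s. (\<lambda>i. z i + s * (x i + r * y i))) ` S r) \<union> (\<lambda>s. (\<lambda>i. z i + s * y i)) ` T"
    proof (cases "a = 0")
      case True
      then have "p = (\<lambda>i. z i + b * y i)" using pab by simp
      moreover have "b \<in> T" unfolding T_def using gp calculation by simp
      ultimately show ?thesis by blast
    next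
      case False
      have "p = (\<lambda>i. z i + a * (x i + (b / a) * y i))" unfolding pab
      proof
        fix i show "z i + a * x i + b * y i = z i + a * (x i + b / a * y i)"
          using False by (simp add: distrib_left)
      qed
      moreover have "a \<in> S (b / a)" unfolding S_def using gp calculation by simp
      ultimately show ?thesis by blast
    qed
  qed
  have "card {y \<in> Q. g y = f y} \<le> card ((\<Union>r. (\<lambda>s. (\<lambda>i. z i + s * (x i + r * y i))) ` S r) \<union> (\<lambda>s. (\<lambda>i. z i + s * y i)) ` T)"
    by (rule card_mono[OF _ sub]) simp
  also have "\<dots> \<le> card (\<Union>r. (\<lambda>s. (\<lambda>i. z i + s * (x i + r * y i))) ` S r) + card ((\<lambda>s. (\<lambda>i. z i + s * y i)) ` T)"
    by (rule card_Un_le)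
  also have "\<dots> \<le> (\<Sum>r\<in>UNIV. card ((\<lambda>s. (\<lambda>i. z i + s * (x i + r * y i))) ` S r)) + card T"
    by (intro add_mono card_UN_le card_image_le) auto
  also have "\<dots> \<le> (\<Sum>r\<in>(UNIV::'a set). d) + d"
    by (intro add_mono sum_mono T order_trans[OF card_image_le S]) auto
  also have "\<dots> = d * (card (UNIV :: 'a set) + 1)" by simp
  finally show ?thesis .
qed

lemma supp_finite: "finite (supp d A (Q :: ('n::finite \<Rightarrow> 'a::{finite,field}) set))"
  by simp

lemma BQ:
  fixes Q :: "('n::finite \<Rightarrow> 'a::{finite,field}) set"
  assumes "Q \<in> affine_planes" "f1 \<in> low_deg d Q" "A Q f1 \<noteq> 0"
  shows "card {y \<in> Q. \<forall>a. mu d A Q y a = 0} \<le> (card (supp d A Q) - 1) * (d * (card (UNIV :: 'a set) + 1))"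
proof -
  have f1S: "f1 \<in> supp d A Q" using assms unfolding supp_def by simp
  have sub: "{y \<in> Q. \<forall>a. mu d A Q y a = 0} \<subseteq> (\<Union>g \<in> supp d A Q - {f1}. {y \<in> Q. g y = f1 y})"
  proof
    fix y assume y: "y \<in> {y \<in> Q. \<forall>a. mu d A Q y a = 0}"
    show "y \<in> (\<Union>g \<in> supp d A Q - {f1}. {y \<in> Q. g y = f1 y})"
    proof (rule ccontr)
      assume no: "y \<notin> (\<Union>g \<in> supp d A Q - {f1}. {y \<in> Q. g y = f1 y})"
      have "mu d A Q y (f1 y) = (\<Sum>f \<in> {f \<in> low_deg d Q. f y = f1 y}. A Q f)" unfolding mu_def by simp
      also have "\<dots> = A Q f1 + (\<Sum>f \<in> {f \<in> low_deg d Q. f y = f1 y} - {f1}. A Q f)"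
        by (rule sum.remove) (use assms(2) in auto)
      also have "(\<Sum>f \<in> {f \<in> low_deg d Q. f y = f1 y} - {f1}. A Q f) = 0"
      proof (rule sum.neutral, rule ballI)
        fix f assume f: "f \<in> {f \<in> low_deg d Q. f y = f1 y} - {f1}"
        show "A Q f = 0"
        proof (rule ccontr)
          assume "A Q f \<noteq> 0"
          then have "f \<in> supp d A Q - {f1}" using f unfolding supp_def by simp
          then show False using no f y by blast
        qed
      qed
      finally have "mu d A Q y (f1 y) \<noteq> 0" using assms(3) by simp
      then show False using y by simp
    qed
  qed
  have "card {y \<in> Q. \<forall>a. mu d A Q y a = 0} \<le> card (\<Union>g \<in> supp d A Q - {f1}. {y \<in> Q. g y = f1 y})"
    by (rule card_mono[OF _ sub]) simp
  also have "\<dots> \<le> (\<Sum>g \<in> supp d A Q - {f1}. card {y \<in> Q. g y = f1 y})"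
    by (rule card_UN_le) simp
  also have "\<dots> \<le> of_nat (card (supp d A Q - {f1})) * (d * (card (UNIV :: 'a set) + 1))"
  proof (rule sum_bounded_above)
    fix g assume g: "g \<in> supp d A Q - {f1}"
    then have "g \<in> low_deg d Q" unfolding supp_def by simp
    with g show "card {y \<in> Q. g y = f1 y} \<le> d * (card (UNIV :: 'a set) + 1)"
      using Eg[OF assms(1) assms(2), of g] by auto
  qed
  also have "\<dots> = (card (supp d A Q) - 1) * (d * (card (UNIV :: 'a set) + 1))"
    using f1S by simp
  finally show ?thesis .
qed

definition tr :: "('n \<Rightarrow> 'a::field) \<Rightarrow> ('n \<Rightarrow> 'a) set \<Rightarrow> ('n \<Rightarrow> 'a) set" where
  "tr v P = (\<lambda>p. (\<lambda>i. p i + v i)) ` P"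

lemma tr_plane: "tr v (plane_of \<alpha> x y) = plane_of (\<lambda>i. \<alpha> i + v i) x y"
  unfolding tr_def plane_image image_comp
  by (intro image_cong) (auto simp: fun_eq_iff algebra_simps split: prod.split)

lemma tr_planes: "P \<in> affine_planes \<Longrightarrow> tr v P \<in> affine_planes"
  by (metis affine_planesE affine_planesI tr_plane)

lemma tr_inv: "tr (\<lambda>i. - v i) (tr v P) = P"
  unfolding tr_def image_comp by simp

lemma C1:
  fixes x0 :: "'n::finite \<Rightarrow> 'a::{finite,field}"
  shows "card {P \<in> affine_planes. x0 \<in> P} * card (UNIV :: ('n \<Rightarrow> 'a) set)
     \<le> card (affine_planes :: ('n \<Rightarrow> 'a) set set) * card (UNIV :: 'a set)^2"
proof -
  have le: "card {P \<in> affine_planes. x0 \<in> P} \<le> card {P \<in> affine_planes. x \<in> P}" for x :: "'n \<Rightarrow> 'a"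
  proof -
    define v where "v = (\<lambda>i. x i - x0 i)"
    have "inj_on (tr v) {P \<in> affine_planes. x0 \<in> P}"
      by (metis (no_types, lifting) inj_onI tr_inv)
    moreover have "tr v ` {P \<in> affine_planes. x0 \<in> P} \<subseteq> {P \<in> affine_planes. x \<in> P}"
    proof
      fix P' assume "P' \<in> tr v ` {P \<in> affine_planes. x0 \<in> P}"
      then obtain P where P: "P \<in> affine_planes" "x0 \<in> P" "P' = tr v P" by blast
      have "(\<lambda>i. x0 i + v i) \<in> P'" unfolding P(3) tr_def using P(2) by blast
      moreover have "(\<lambda>i. x0 i + v i) = x" unfolding v_def by simp
      ultimately show "P' \<in> {P \<in> affine_planes. x \<in> P}" using tr_planes[OF P(1)] P(3) by simp
    qed
    ultimately show ?thesis by (intro card_inj_on_le) auto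
  qed
  have "card {P \<in> affine_planes. x0 \<in> P} * card (UNIV :: ('n \<Rightarrow> 'a) set)
      = (\<Sum>x \<in> (UNIV :: ('n \<Rightarrow> 'a) set). card {P \<in> affine_planes. x0 \<in> P})" by simp
  also have "\<dots> \<le> (\<Sum>x \<in> (UNIV :: ('n \<Rightarrow> 'a) set). card {P \<in> affine_planes. x \<in> P})"
    by (rule sum_mono) (rule le)
  also have "\<dots> = (\<Sum>x \<in> (UNIV :: ('n \<Rightarrow> 'a) set). \<Sum>P \<in> (affine_planes :: ('n \<Rightarrow> 'a) set set). of_bool (x \<in> P))"
    by (simp add: Int_def)
  also have "\<dots> = (\<Sum>P \<in> (affine_planes :: ('n \<Rightarrow> 'a) set set). \<Sum>x \<in> (UNIV :: ('n \<Rightarrow> 'a) set). of_bool (x \<in> P))"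
    by (rule sum.swap)
  also have "\<dots> = (\<Sum>P \<in> (affine_planes :: ('n \<Rightarrow> 'a) set set). card (UNIV :: 'a set)^2)"
    by (rule sum.cong[OF refl]) (simp add: card_affine_plane Int_def)
  also have "\<dots> = card (affine_planes :: ('n \<Rightarrow> 'a) set set) * card (UNIV :: 'a set)^2" by simp
  finally show ?thesis .
qed

lemma card_line:
  fixes w :: "'n \<Rightarrow> 'a::{finite,field}"
  assumes "w k \<noteq> 0"
  shows "card (lineof \<beta> w) = card (UNIV :: 'a set)"
proof -
  have "lineof \<beta> w = (\<lambda>s. (\<lambda>i. \<beta> i + s * w i)) ` UNIV" unfolding lineof_def by auto
  moreover have "inj (\<lambda>s. (\<lambda>i. \<beta> i + s * w i))"
  proof (rule injI)
    fix s s' assume "(\<lambda>i. \<beta> i + s * w i) = (\<lambda>i. \<beta> i + s' * w i)"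
    then have "\<beta> k + s * w k = \<beta> k + s' * w k" by meson
    then show "s = s'" using assms by simp
  qed
  ultimately show ?thesis by (simp add: card_image)
qed

lemma C2:
  fixes y y' :: "'n::finite \<Rightarrow> 'a::{finite,field}"
  assumes "y \<noteq> y'"
  shows "card {P \<in> affine_planes. y \<in> P \<and> y' \<in> P} * (card (UNIV :: 'a set)^2 - card (UNIV :: 'a set))
     \<le> card (UNIV :: ('n \<Rightarrow> 'a) set) - card (UNIV :: 'a set)"
proof -
  define w where "w = (\<lambda>i. y' i - y i)"
  obtain k where k: "w k \<noteq> 0" using assms unfolding w_def by (metis eq_iff_diff_eq_0 ext)
  define L where "L = lineof y w"
  define S where "S = {P \<in> affine_planes. y \<in> P \<and> y' \<in> P}"
  have LP: "L \<subseteq> P" if "P \<in> S" for P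
    using line_in_plane[of P y y'] that unfolding S_def L_def w_def by auto
  have cL: "card L = card (UNIV :: 'a set)" unfolding L_def by (rule card_line[where k=k and w=w, OF k])
  have cP: "card (P - L) = card (UNIV :: 'a set)^2 - card (UNIV :: 'a set)" if "P \<in> S" for P
    using card_Diff_subset[OF _ LP[OF that]] cL card_affine_plane[of P] that unfolding S_def by simp
  have disj: "(P - L) \<inter> (P' - L) = {}" if "P \<in> S" "P' \<in> S" "P \<noteq> P'" for P P'
  proof -
    have "P \<inter> P' = L" using L1[of P P' w k y] that LP k unfolding S_def L_def by auto
    then show ?thesis by blast
  qed
  have "card S * (card (UNIV :: 'a set)^2 - card (UNIV :: 'a set)) = (\<Sum>P \<in> S. card (P - L))"
    using cP by simp
  also have "\<dots> = card (\<Union>P \<in> S. P - L)"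
    by (rule card_UN_disjoint[symmetric]) (use disj in auto)
  also have "\<dots> \<le> card (UNIV - L)" by (rule card_mono) auto
  also have "\<dots> = card (UNIV :: ('n \<Rightarrow> 'a) set) - card (UNIV :: 'a set)"
    using cL by (simp add: card_Diff_subset)
  finally show ?thesis unfolding S_def .
qed

lemma swap3: "(\<Sum>a\<in>A. \<Sum>b\<in>B. \<Sum>c\<in>C. f a b c) = (\<Sum>b\<in>B. \<Sum>c\<in>C. \<Sum>a\<in>A. (f a b c :: real))"
proof -
  have "(\<Sum>a\<in>A. \<Sum>b\<in>B. \<Sum>c\<in>C. f a b c) = (\<Sum>b\<in>B. \<Sum>a\<in>A. \<Sum>c\<in>C. f a b c)" by (rule sum.swap)
  also have "\<dots> = (\<Sum>b\<in>B. \<Sum>c\<in>C. \<Sum>a\<in>A. f a b c)" by (rule sum.cong[OF refl]) (rule sum.swap)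
  finally show ?thesis .
qed

lemma IW:
  fixes P :: "('n::finite \<Rightarrow> 'a::{finite,field}) set"
  assumes "P \<in> affine_planes" "x0 \<notin> P" "y \<in> P" "y' \<in> P" "y \<noteq> y'"
  shows "indep2 (\<lambda>i. y i - x0 i) (\<lambda>i. y' i - x0 i)"
  unfolding indep2_def
proof (intro allI impI)
  fix a b :: 'a
  assume h: "\<forall>i. a * (y i - x0 i) + b * (y' i - x0 i) = 0"
  show "a = 0 \<and> b = 0"
  proof (cases "a + b = 0")
    case True
    then have bb: "b = - a" by (simp add: add_eq_0_iff)
    obtain k where k: "y k \<noteq> y' k" using assms(5) by (metis ext)
    have "a * (y k - x0 k) + b * (y' k - x0 k) = 0" using h by blast
    then have "a * (y k - y' k) = 0" unfolding bb by (simp add: algebra_simps)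
    then have "a = 0" using k by simp
    then show ?thesis using bb by simp
  next
    case False
    have "x0 = (\<lambda>i. y i + (b / (a + b)) * (y' i - y i))"
    proof
      fix i
      have e: "a * (y i - x0 i) + b * (y' i - x0 i) = 0" using h by blast
      then have "(a + b) * x0 i = a * y i + b * y' i" by (simp add: algebra_simps)
      then have "x0 i = (a * y i + b * y' i) / (a + b)" using False by (simp add: field_simps)
      also have "\<dots> = y i + (b / (a + b)) * (y' i - y i)" using False by (simp add: field_simps)
      finally show "x0 i = y i + (b / (a + b)) * (y' i - y i)" .
    qed
    then have "x0 \<in> lineof y (\<lambda>i. y' i - y i)" using lineofI[of y "b / (a + b)" "\<lambda>i. y' i - y i"] by simp
    then have "x0 \<in> P" using line_in_plane[OF assms(1,3,4)] by blast
    then show ?thesis using assms(2) by simp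
  qed
qed

lemma LB:
  fixes P :: "('n::finite \<Rightarrow> 'a::{finite,field}) set"
  assumes "P \<in> affine_planes" "x0 \<notin> P"
  shows "real (card (UNIV :: 'a set))^2 * (real (card (UNIV :: 'a set))^2 - 1) \<le>
    (\<Sum>Q \<in> {Q \<in> affine_planes. x0 \<in> Q}. \<Sum>y \<in> UNIV. \<Sum>y' \<in> UNIV.
        of_bool (y \<in> P \<and> y' \<in> P \<and> y \<noteq> y' \<and> y \<in> Q \<and> y' \<in> Q))"
proof -
  let ?X = "{Q \<in> affine_planes. x0 \<in> Q}"
  let ?q = "card (UNIV :: 'a set)"
  have one: "of_bool (y \<in> P \<and> y' \<in> P \<and> y \<noteq> y') \<le>
      (\<Sum>Q \<in> ?X. of_bool (y \<in> P \<and> y' \<in> P \<and> y \<noteq> y' \<and> y \<in> Q \<and> y' \<in> Q) :: real)" for y y'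
  proof (cases "y \<in> P \<and> y' \<in> P \<and> y \<noteq> y'")
    case False
    have "(of_bool (y \<in> P \<and> y' \<in> P \<and> y \<noteq> y') :: real) = 0" using False by simp
    moreover have "0 \<le> (\<Sum>Q \<in> ?X. of_bool (y \<in> P \<and> y' \<in> P \<and> y \<noteq> y' \<and> y \<in> Q \<and> y' \<in> Q) :: real)"
      by (rule sum_nonneg) simp
    ultimately show ?thesis by linarith
  next
    case True
    let ?Q = "plane_of x0 (\<lambda>i. y i - x0 i) (\<lambda>i. y' i - x0 i)"
    have ind: "indep2 (\<lambda>i. y i - x0 i) (\<lambda>i. y' i - x0 i)" using IW[OF assms] True by blast
    have "(\<lambda>i. x0 i + 0 * (y i - x0 i) + 0 * (y' i - x0 i)) \<in> ?Q" by (rule plane_ofI)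
    then have x0Q: "x0 \<in> ?Q" by simp
    have "(\<lambda>i. x0 i + 1 * (y i - x0 i) + 0 * (y' i - x0 i)) \<in> ?Q" by (rule plane_ofI)
    then have yQ: "y \<in> ?Q" by simp
    have "(\<lambda>i. x0 i + 0 * (y i - x0 i) + 1 * (y' i - x0 i)) \<in> ?Q" by (rule plane_ofI)
    then have y'Q: "y' \<in> ?Q" by simp
    have QX: "?Q \<in> ?X" using affine_planesI[OF ind] x0Q by simp
    have "of_bool (y \<in> P \<and> y' \<in> P \<and> y \<noteq> y' \<and> y \<in> ?Q \<and> y' \<in> ?Q) \<le>
      (\<Sum>Q \<in> ?X. of_bool (y \<in> P \<and> y' \<in> P \<and> y \<noteq> y' \<and> y \<in> Q \<and> y' \<in> Q) :: real)"
      by (rule member_le_sum[OF QX]) auto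
    then show ?thesis using True yQ y'Q by simp
  qed
  have "real ?q^2 * (real ?q^2 - 1) = (\<Sum>y \<in> UNIV. \<Sum>y' \<in> UNIV. of_bool (y \<in> P \<and> y' \<in> P \<and> y \<noteq> y') :: real)"
  proof -
    have "(\<Sum>y \<in> UNIV. \<Sum>y' \<in> UNIV. of_bool (y \<in> P \<and> y' \<in> P \<and> y \<noteq> y') :: real)
        = (\<Sum>y \<in> UNIV. of_bool (y \<in> P) * real (card (P - {y})))"
    proof (rule sum.cong[OF refl])
      fix y :: "'n \<Rightarrow> 'a"
      have "(\<Sum>y' \<in> UNIV. of_bool (y \<in> P \<and> y' \<in> P \<and> y \<noteq> y') :: real) = real (card (UNIV \<inter> {y'. y \<in> P \<and> y' \<in> P \<and> y \<noteq> y'}))"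
        by (simp del: sum_of_bool_eq add: sum_of_bool_eq[of UNIV])
      also have "\<dots> = of_bool (y \<in> P) * real (card (P - {y}))"
      proof (cases "y \<in> P")
        case True
        have "UNIV \<inter> {y'. y \<in> P \<and> y' \<in> P \<and> y \<noteq> y'} = P - {y}" using True by auto
        then show ?thesis using True by simp
      next
        case False
        have "UNIV \<inter> {y'. y \<in> P \<and> y' \<in> P \<and> y \<noteq> y'} = {}" using False by auto
        then show ?thesis using False by simp
      qed
      finally show "(\<Sum>y' \<in> UNIV. of_bool (y \<in> P \<and> y' \<in> P \<and> y \<noteq> y') :: real) = of_bool (y \<in> P) * real (card (P - {y}))" .
    qed
    also have "\<dots> = (\<Sum>y \<in> P. real (card (P - {y})))"
      by (simp add: Int_def)
    also have "\<dots> = (\<Sum>y \<in> P. real ?q^2 - 1)"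
    proof (rule sum.cong[OF refl])
      fix y assume "y \<in> P"
      have "0 < ?q" by (rule finite_UNIV_card_ge_0) simp
      then have "1 \<le> ?q^2" by simp
      then show "real (card (P - {y})) = real ?q^2 - 1"
        using card_affine_plane[OF assms(1)] \<open>y \<in> P\<close> by (simp add: of_nat_diff)
    qed
    also have "\<dots> = real ?q^2 * (real ?q^2 - 1)" using card_affine_plane[OF assms(1)] by simp
    finally show ?thesis by simp
  qed
  also have "\<dots> \<le> (\<Sum>y \<in> UNIV. \<Sum>y' \<in> UNIV. \<Sum>Q \<in> ?X. of_bool (y \<in> P \<and> y' \<in> P \<and> y \<noteq> y' \<and> y \<in> Q \<and> y' \<in> Q))"
    by (intro sum_mono one)
  also have "\<dots> = (\<Sum>Q \<in> ?X. \<Sum>y \<in> UNIV. \<Sum>y' \<in> UNIV. of_bool (y \<in> P \<and> y' \<in> P \<and> y \<noteq> y' \<and> y \<in> Q \<and> y' \<in> Q))"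
    by (rule swap3[symmetric])
  finally show ?thesis .
qed

lemma zero_mu:
  assumes "\<forall>f\<in>low_deg d P. A P f = 0"
  shows "mu d A P y a = 0"
  unfolding mu_def using assms by (intro sum.neutral) auto

lemma inB:
  fixes P Q :: "('n::finite \<Rightarrow> 'a::{finite,field}) set"
  assumes "weak_PvP d A" "P \<in> affine_planes" "Q \<in> affine_planes" "\<forall>f\<in>low_deg d P. A P f = 0"
    "y \<in> P" "y' \<in> P" "y \<in> Q" "y' \<in> Q" "y \<noteq> y'"
  shows "\<forall>a. mu d A Q y a = 0"
proof -
  define w where "w = (\<lambda>i. y' i - y i)"
  obtain k where k: "w k \<noteq> 0" using assms(9) unfolding w_def by (metis eq_iff_diff_eq_0 ext)
  have lP: "lineof y w \<subseteq> P" unfolding w_def by (rule line_in_plane[OF assms(2,5,6)])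
  have lQ: "lineof y w \<subseteq> Q" unfolding w_def by (rule line_in_plane[OF assms(3,7,8)])
  have "mu d A Q y = mu d A P y"
    by (rule SL[where w=w and k=k and \<beta>=y, OF assms(1,3,2) k lQ lP base_in_line])
  then show ?thesis using zero_mu[where d=d and P=P and A=A, OF assms(4)] by simp
qed

lemma UB:
  fixes Q :: "('n::finite \<Rightarrow> 'a::{finite,field}) set" and Z :: "('n \<Rightarrow> 'a) set set"
  assumes "weak_PvP d A" "Q \<in> affine_planes" "Z \<subseteq> affine_planes" "\<forall>P\<in>Z. \<forall>f\<in>low_deg d P. A P f = 0"
    "\<And>y y'. y \<noteq> y' \<Longrightarrow> real (card {P \<in> (affine_planes :: ('n \<Rightarrow> 'a) set set). y \<in> P \<and> y' \<in> P}) \<le> Gr" "0 \<le> Gr"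
  shows "(\<Sum>y \<in> UNIV. \<Sum>y' \<in> UNIV. \<Sum>P \<in> Z. of_bool (y \<in> P \<and> y' \<in> P \<and> y \<noteq> y' \<and> y \<in> Q \<and> y' \<in> Q))
     \<le> real (card {y \<in> Q. \<forall>a. mu d A Q y a = 0}) * (real (card (UNIV :: 'a set))^2 - 1) * Gr"
proof -
  define B where "B = {y \<in> Q. \<forall>a. mu d A Q y a = 0}"
  let ?q = "card (UNIV :: 'a set)"
  have one: "(\<Sum>P \<in> Z. of_bool (y \<in> P \<and> y' \<in> P \<and> y \<noteq> y' \<and> y \<in> Q \<and> y' \<in> Q) :: real)
      \<le> of_bool (y \<in> B \<and> y' \<in> Q - {y}) * Gr" for y y'
  proof (cases "y \<in> Q \<and> y' \<in> Q \<and> y \<noteq> y'")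
    case False
    then have "(\<Sum>P \<in> Z. of_bool (y \<in> P \<and> y' \<in> P \<and> y \<noteq> y' \<and> y \<in> Q \<and> y' \<in> Q) :: real) = 0"
      by (intro sum.neutral) auto
    moreover have "0 \<le> of_bool (y \<in> B \<and> y' \<in> Q - {y}) * Gr" using assms(6) by simp
    ultimately show ?thesis by linarith
  next
    case True
    have "(\<Sum>P \<in> Z. of_bool (y \<in> P \<and> y' \<in> P \<and> y \<noteq> y' \<and> y \<in> Q \<and> y' \<in> Q) :: real)
        = (\<Sum>P \<in> Z. of_bool (y \<in> P \<and> y' \<in> P))"
      using True by (intro sum.cong) auto
    also have "\<dots> = real (card (Z \<inter> {P. y \<in> P \<and> y' \<in> P}))"
      using sum_of_bool_eq[of Z "\<lambda>P. y \<in> P \<and> y' \<in> P", where 'a=real] by simp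
    finally have eq: "(\<Sum>P \<in> Z. of_bool (y \<in> P \<and> y' \<in> P \<and> y \<noteq> y' \<and> y \<in> Q \<and> y' \<in> Q) :: real)
        = real (card (Z \<inter> {P. y \<in> P \<and> y' \<in> P}))" .
    show ?thesis
    proof (cases "Z \<inter> {P. y \<in> P \<and> y' \<in> P} = {}")
      case True
      then show ?thesis using eq assms(6) by simp
    next
      case False
      then obtain P where P: "P \<in> Z" "y \<in> P" "y' \<in> P" by blast
      have "\<forall>a. mu d A Q y a = 0"
        using inB[OF assms(1) _ assms(2) _ P(2,3)] P(1) assms(3,4) True by blast
      then have yB: "y \<in> B" unfolding B_def using True by simp
      have "card (Z \<inter> {P. y \<in> P \<and> y' \<in> P}) \<le> card {P \<in> affine_planes. y \<in> P \<and> y' \<in> P}"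
        by (rule card_mono) (use assms(3) in auto)
      then have "real (card (Z \<inter> {P. y \<in> P \<and> y' \<in> P})) \<le> Gr" using assms(5)[of y y'] True by linarith
      moreover have "of_bool (y \<in> B \<and> y' \<in> Q - {y}) = (1::real)" using yB True by auto
      ultimately show ?thesis unfolding eq by simp
    qed
  qed
  have "(\<Sum>y \<in> UNIV. \<Sum>y' \<in> UNIV. \<Sum>P \<in> Z. of_bool (y \<in> P \<and> y' \<in> P \<and> y \<noteq> y' \<and> y \<in> Q \<and> y' \<in> Q))
      \<le> (\<Sum>y \<in> (UNIV :: ('n \<Rightarrow> 'a) set). \<Sum>y' \<in> (UNIV :: ('n \<Rightarrow> 'a) set). of_bool (y \<in> B \<and> y' \<in> Q - {y}) * Gr)"
    by (intro sum_mono one)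
  also have "\<dots> = (\<Sum>y \<in> (UNIV :: ('n \<Rightarrow> 'a) set). of_bool (y \<in> B) * (real (card (Q - {y})) * Gr))"
  proof (rule sum.cong[OF refl])
    fix y :: "'n \<Rightarrow> 'a"
    have "(\<Sum>y' \<in> (UNIV :: ('n \<Rightarrow> 'a) set). of_bool (y \<in> B \<and> y' \<in> Q - {y}) * Gr)
        = (\<Sum>y' \<in> (UNIV :: ('n \<Rightarrow> 'a) set). of_bool (y \<in> B) * (of_bool (y' \<in> Q - {y}) * Gr))"
      by (intro sum.cong) auto
    also have "\<dots> = of_bool (y \<in> B) * (\<Sum>y' \<in> (UNIV :: ('n \<Rightarrow> 'a) set). of_bool (y' \<in> Q - {y}) * Gr)"
      by (simp only: sum_distrib_left)
    also have "(\<Sum>y' \<in> (UNIV :: ('n \<Rightarrow> 'a) set). of_bool (y' \<in> Q - {y}) * Gr) = real (card (Q - {y})) * Gr"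
    proof -
      have e: "UNIV \<inter> {y'. y' \<in> Q - {y}} = Q - {y}" by auto
      have "(\<Sum>y'\<in>(UNIV :: ('n \<Rightarrow> 'a) set). of_bool (y' \<in> Q - {y}) :: real) = real (card (UNIV \<inter> {y'. y' \<in> Q - {y}}))"
        by (rule sum_of_bool_eq) simp_all
      then show ?thesis unfolding e by (simp only: sum_distrib_right[symmetric])
    qed
    finally show "(\<Sum>y' \<in> (UNIV :: ('n \<Rightarrow> 'a) set). of_bool (y \<in> B \<and> y' \<in> Q - {y}) * Gr)
        = of_bool (y \<in> B) * (real (card (Q - {y})) * Gr)" .
  qed
  also have "\<dots> = (\<Sum>y \<in> B. real (card (Q - {y})) * Gr)"
    by (simp add: Int_def)
  also have "\<dots> = (\<Sum>y \<in> B. (real ?q^2 - 1) * Gr)"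
  proof (rule sum.cong[OF refl])
    fix y assume "y \<in> B"
    then have "y \<in> Q" unfolding B_def by simp
    have "0 < ?q" by (rule finite_UNIV_card_ge_0) simp
    then have "1 \<le> ?q^2" by simp
    then show "real (card (Q - {y})) * Gr = (real ?q^2 - 1) * Gr"
      using card_affine_plane[OF assms(2)] \<open>y \<in> Q\<close> by (simp add: of_nat_diff)
  qed
  also have "\<dots> = real (card B) * (real ?q^2 - 1) * Gr" by simp
  finally show ?thesis unfolding B_def .
qed

lemma final_arith:
  fixes z al xx q u M N Gr :: real and d :: nat
  assumes q2: "2 \<le> q" and u1: "1 \<le> u" and lt: "(real d + 3) * u < q"
    and low: "z * (q^2 * (q^2 - 1)) \<le> xx * (M * (q^2 - 1) * Gr)"
    and c1: "xx * N \<le> al * q^2"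
    and Gr: "Gr * (q^2 - q) = N"
    and M: "M = (u - 1) * real d * (q + 1)"
    and al: "0 < al" and z0: "0 \<le> z" and xx0: "0 \<le> xx"
  shows "z / al \<le> (real d + 3) * (u / q)"
proof -
  have qp: "0 < q" using q2 by simp
  have qq: "0 < q^2 - q"
  proof -
    have "2 * q \<le> q * q" using q2 by (intro mult_right_mono) auto
    then show ?thesis using q2 by (simp add: power2_eq_square)
  qed
  have q1: "0 < q^2 - 1"
  proof -
    have "2 * q \<le> q * q" using q2 by (intro mult_right_mono) auto
    then have "1 < q * q" using q2 by linarith
    then show ?thesis by (simp add: power2_eq_square)
  qed
  have M0: "0 \<le> M" unfolding M using u1 q2 by simp
  have "(q^2 - 1) * (z * q^2) \<le> (q^2 - 1) * (xx * M * Gr)" using low by (simp add: algebra_simps)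
  then have s1: "z * q^2 \<le> xx * M * Gr" using q1 by simp
  have "z * q^2 * (q^2 - q) \<le> xx * M * Gr * (q^2 - q)" using s1 qq by (intro mult_right_mono) auto
  also have "\<dots> = xx * M * (Gr * (q^2 - q))" by (simp only: mult.assoc)
  also have "\<dots> = M * (xx * N)" unfolding Gr by simp
  also have "\<dots> \<le> M * (al * q^2)" using c1 M0 by (intro mult_left_mono) auto
  finally have "q^2 * (z * (q^2 - q)) \<le> q^2 * (al * M)" by (simp add: algebra_simps)
  then have s2: "z * (q^2 - q) \<le> al * M" using qp by simp
  have key: "M \<le> (real d + 3) * u * (q - 1)"
  proof -
    have "3 * u \<le> (real d + 3) * u" using u1 by (intro mult_right_mono) auto
    then have "2 * u < q + 1" using lt u1 by linarith
    then have a: "0 \<le> real d * (q + 1 - 2 * u)" by simp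
    have b: "0 \<le> 3 * u * (q - 1)" using u1 q2 by simp
    have "(real d + 3) * u * (q - 1) - M = real d * (q + 1 - 2 * u) + 3 * u * (q - 1)"
      unfolding M by (simp add: algebra_simps)
    then show ?thesis using a b by linarith
  qed
  have "z * (q * (q - 1)) \<le> al * ((real d + 3) * u * (q - 1))"
  proof -
    have "z * (q * (q - 1)) = z * (q^2 - q)" by (simp add: power2_eq_square algebra_simps)
    also have "\<dots> \<le> al * M" by (rule s2)
    also have "\<dots> \<le> al * ((real d + 3) * u * (q - 1))" using key al by (intro mult_left_mono) auto
    finally show ?thesis .
  qed
  then have "(q - 1) * (z * q) \<le> (q - 1) * (al * (real d + 3) * u)" by (simp add: algebra_simps)
  then have "z * q \<le> al * (real d + 3) * u" using q2 by simp
  then show ?thesis using al qp by (simp add: pos_divide_le_eq field_simps)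
qed

theorem claim6p2:
  fixes \<epsilon> :: real and d :: nat
    and A :: "('n::finite \<Rightarrow> 'a::{finite,field}) set \<Rightarrow> (('n \<Rightarrow> 'a) \<Rightarrow> 'a) \<Rightarrow> int"
  assumes "\<epsilon> > 0"
    and "card (UNIV :: 'n set) \<ge> 3"
    and "\<exists>P \<in> affine_planes. \<exists>f \<in> low_deg d P. A P f \<noteq> 0"
    and "weak_PvP d A"
    and "\<forall>P \<in> affine_planes. real (card (supp d A P)) \<le> real (card (UNIV :: 'a set)) powr \<epsilon>"
  shows "real (card {P \<in> affine_planes. \<forall>f \<in> low_deg d P. A P f = 0}) / real (card (affine_planes :: ('n \<Rightarrow> 'a) set set))
           \<le> (real d + 3) * real (card (UNIV :: 'a set)) powr (-1 + \<epsilon>)"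
proof -
  define q where "q = real (card (UNIV :: 'a set))"
  define u where "u = q powr \<epsilon>"
  define Z where "Z = {P \<in> (affine_planes :: ('n \<Rightarrow> 'a) set set). \<forall>f \<in> low_deg d P. A P f = 0}"
  define All where "All = (affine_planes :: ('n \<Rightarrow> 'a) set set)"
  have q2: "2 \<le> q"
  proof -
    have "card {0::'a, 1} \<le> card (UNIV :: 'a set)" by (rule card_mono) auto
    then show ?thesis unfolding q_def by simp
  qed
  have qp: "0 < q" using q2 by simp
  have u1: "1 \<le> u" unfolding u_def using q2 assms(1) by (intro ge_one_powr_ge_zero) auto
  have cq: "real (card (UNIV :: 'a set)) powr (-1 + \<epsilon>) = u / q"
  proof -
    have "q powr (-1 + \<epsilon>) = q powr (-1) * q powr \<epsilon>" by (rule powr_add)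
    also have "q powr (-1) = inverse q" using qp by (simp add: powr_minus)
    finally show ?thesis unfolding u_def q_def[symmetric] by (simp add: divide_inverse mult.commute)
  qed
  have ZA: "Z \<subseteq> All" unfolding Z_def All_def by auto
  have finA: "finite All" by simp
  have main: "real (card Z) / real (card All) \<le> (real d + 3) * (u / q)"
  proof (cases "1 \<le> (real d + 3) * (u / q)")
    case True
    have "card Z \<le> card All" using card_mono[OF finA ZA] .
    then have "real (card Z) / real (card All) \<le> 1"
      by (cases "card All = 0") (auto simp: divide_le_eq_1)
    then show ?thesis using True by linarith
  next
    case False
    have lt: "(real d + 3) * u < q"
    proof -
      have "(real d + 3) * u / q < 1" using False by simp
      then show ?thesis using qp by (simp add: divide_less_eq)
    qed
    obtain P0 f1 where P0: "P0 \<in> affine_planes" "f1 \<in> low_deg d P0" "A P0 f1 \<noteq> 0" using assms(3) by blast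
    have f1S: "f1 \<in> supp d A P0" using P0 unfolding supp_def by simp
    have "0 < card (supp d A P0)" using f1S card_gt_0_iff[of "supp d A P0"] by auto
    then have m0: "1 \<le> card (supp d A P0)" by simp
    have mu0: "real (card (supp d A P0)) \<le> u" using assms(5) P0(1) unfolding u_def q_def by simp
    define B0 where "B0 = {y \<in> P0. \<forall>a. mu d A P0 y a = 0}"
    have B0c: "card B0 \<le> (card (supp d A P0) - 1) * (d * (card (UNIV :: 'a set) + 1))"
      unfolding B0_def by (rule BQ[where Q=P0 and d=d and A=A, OF P0])
    have "real (card B0) < real (card P0)"
    proof -
      have "real (card B0) \<le> real ((card (supp d A P0) - 1) * (d * (card (UNIV :: 'a set) + 1)))"
        using B0c by linarith
      also have "\<dots> = real (card (supp d A P0) - 1) * (real d * (q + 1))"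
        unfolding q_def by (simp only: of_nat_mult of_nat_add of_nat_1)
      also have "\<dots> = (real (card (supp d A P0)) - 1) * real d * (q + 1)"
        using m0 by (simp add: of_nat_diff mult.assoc)
      also have "\<dots> \<le> (u - 1) * real d * (q + 1)"
        using mu0 q2 by (intro mult_right_mono) auto
      also have "\<dots> < (q - 3) * (q + 1)"
      proof -
        have e1: "(real d + 3) * u = real d * u + 3 * u" by (simp add: algebra_simps)
        have e2: "(u - 1) * real d = real d * u - real d" by (simp add: algebra_simps)
        have "(u - 1) * real d < q - 3" using lt u1 e1 e2 by linarith
        then show ?thesis using q2 by (intro mult_strict_right_mono) auto
      qed
      also have "\<dots> < q^2"
      proof -
        have "(q - 3) * (q + 1) = q^2 - 2 * q - 3" by (simp add: power2_eq_square algebra_simps)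
        then show ?thesis using q2 by linarith
      qed
      also have "\<dots> = real (card P0)" using card_affine_plane[OF P0(1)] unfolding q_def by simp
      finally show ?thesis .
    qed
    have "\<not> P0 \<subseteq> B0"
    proof
      assume "P0 \<subseteq> B0"
      then have "card P0 \<le> card B0" by (intro card_mono) auto
      then show False using \<open>real (card B0) < real (card P0)\<close> by linarith
    qed
    then obtain x0 where x0: "x0 \<in> P0" "x0 \<notin> B0" by blast
    then obtain a0 where a0: "mu d A P0 x0 a0 \<noteq> 0" unfolding B0_def by blast
    define X where "X = {Q \<in> All. x0 \<in> Q}"
    have nzX: "\<exists>f\<in>low_deg d Q. A Q f \<noteq> 0" if "Q \<in> X" for Q
    proof (rule ccontr)
      assume "\<not> (\<exists>f\<in>low_deg d Q. A Q f \<noteq> 0)"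
      then have "mu d A Q x0 a0 = 0" by (intro zero_mu) auto
      moreover have "mu d A Q x0 = mu d A P0 x0"
      proof -
        have QA: "Q \<in> affine_planes" and x0Q: "x0 \<in> Q" using that unfolding X_def All_def by auto
        show ?thesis by (rule chain[OF assms(4) P0(1) QA x0(1) x0Q])
      qed
      ultimately show False using a0 by simp
    qed
    have x0Z: "x0 \<notin> P" if "P \<in> Z" for P
    proof
      assume "x0 \<in> P"
      then have "P \<in> X" using that ZA unfolding X_def by auto
      then show False using nzX that unfolding Z_def by auto
    qed
    define M where "M = (u - 1) * real d * (q + 1)"
    have BX: "real (card {y \<in> Q. \<forall>a. mu d A Q y a = 0}) \<le> M" if QX: "Q \<in> X" for Q
    proof -
      obtain f where f: "f \<in> low_deg d Q" "A Q f \<noteq> 0" using nzX[OF QX] by blast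
      have QA: "Q \<in> affine_planes" using QX unfolding X_def All_def by simp
      have fS: "f \<in> supp d A Q" using f unfolding supp_def by simp
      have "0 < card (supp d A Q)" using fS card_gt_0_iff[of "supp d A Q"] by auto
      then have m: "1 \<le> card (supp d A Q)" by simp
      have mu: "real (card (supp d A Q)) \<le> u" using assms(5) QA unfolding u_def q_def by simp
      have "card {y \<in> Q. \<forall>a. mu d A Q y a = 0} \<le> (card (supp d A Q) - 1) * (d * (card (UNIV :: 'a set) + 1))"
        by (rule BQ[where Q=Q and d=d and A=A, OF QA f])
      then have "real (card {y \<in> Q. \<forall>a. mu d A Q y a = 0}) \<le> real ((card (supp d A Q) - 1) * (d * (card (UNIV :: 'a set) + 1)))"
        by linarith
      also have "\<dots> = real (card (supp d A Q) - 1) * (real d * (q + 1))"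
        unfolding q_def by (simp only: of_nat_mult of_nat_add of_nat_1)
      also have "\<dots> = (real (card (supp d A Q)) - 1) * real d * (q + 1)"
        using m by (simp add: of_nat_diff mult.assoc)
      also have "\<dots> \<le> M"
        unfolding M_def using mu q2 by (intro mult_right_mono) auto
      finally show ?thesis .
    qed
    define N where "N = real (card (UNIV :: ('n \<Rightarrow> 'a) set))"
    define Gr where "Gr = N / (q^2 - q)"
    have qq: "0 < q^2 - q"
    proof -
      have "2 * q \<le> q * q" using q2 by (intro mult_right_mono) auto
      then show ?thesis using q2 by (simp add: power2_eq_square)
    qed
    have GrE: "Gr * (q^2 - q) = N" unfolding Gr_def using qq by simp
    have Gr0: "0 \<le> Gr" unfolding Gr_def N_def using qq by simp
    have Grb: "real (card {P \<in> (affine_planes :: ('n \<Rightarrow> 'a) set set). y \<in> P \<and> y' \<in> P}) \<le> Gr"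
      if "y \<noteq> y'" for y y' :: "'n \<Rightarrow> 'a"
    proof -
      let ?S = "{P \<in> (affine_planes :: ('n \<Rightarrow> 'a) set set). y \<in> P \<and> y' \<in> P}"
      have "card ?S * (card (UNIV :: 'a set)^2 - card (UNIV :: 'a set)) \<le> card (UNIV :: ('n \<Rightarrow> 'a) set) - card (UNIV :: 'a set)"
        by (rule C2[OF that])
      then have "card ?S * (card (UNIV :: 'a set)^2 - card (UNIV :: 'a set)) \<le> card (UNIV :: ('n \<Rightarrow> 'a) set)"
        by linarith
      then have "real (card ?S * (card (UNIV :: 'a set)^2 - card (UNIV :: 'a set))) \<le> N"
        unfolding N_def by linarith
      moreover have "card (UNIV :: 'a set) \<le> card (UNIV :: 'a set)^2" by (simp add: power2_eq_square)
      ultimately have "real (card ?S) * (q^2 - q) \<le> N" unfolding q_def by (simp add: of_nat_diff algebra_simps)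
      then show ?thesis unfolding Gr_def using qq by (simp add: pos_le_divide_eq)
    qed
    let ?ind = "\<lambda>P Q y y'. (of_bool (y \<in> P \<and> y' \<in> P \<and> y \<noteq> y' \<and> y \<in> Q \<and> y' \<in> Q) :: real)"
    define W where "W = (\<Sum>P \<in> Z. \<Sum>Q \<in> X. \<Sum>y \<in> (UNIV :: ('n \<Rightarrow> 'a) set). \<Sum>y' \<in> (UNIV :: ('n \<Rightarrow> 'a) set). ?ind P Q y y')"
    have low: "real (card Z) * (q^2 * (q^2 - 1)) \<le> W"
    proof -
      have "real (card Z) * (q^2 * (q^2 - 1)) = (\<Sum>P \<in> Z. q^2 * (q^2 - 1))" by simp
      also have "\<dots> \<le> W" unfolding W_def
      proof (rule sum_mono)
        fix P assume P: "P \<in> Z"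
        have PA: "P \<in> affine_planes" using P unfolding Z_def by simp
        show "q^2 * (q^2 - 1) \<le> (\<Sum>Q \<in> X. \<Sum>y \<in> (UNIV :: ('n \<Rightarrow> 'a) set). \<Sum>y' \<in> (UNIV :: ('n \<Rightarrow> 'a) set). ?ind P Q y y')"
          unfolding X_def All_def q_def by (rule LB[OF PA x0Z[OF P]])
      qed
      finally show ?thesis .
    qed
    have up: "W \<le> real (card X) * (M * (q^2 - 1) * Gr)"
    proof -
      have "W = (\<Sum>Q \<in> X. \<Sum>P \<in> Z. \<Sum>y \<in> (UNIV :: ('n \<Rightarrow> 'a) set). \<Sum>y' \<in> (UNIV :: ('n \<Rightarrow> 'a) set). ?ind P Q y y')"
        unfolding W_def by (rule sum.swap)
      also have "\<dots> = (\<Sum>Q \<in> X. \<Sum>y \<in> (UNIV :: ('n \<Rightarrow> 'a) set). \<Sum>y' \<in> (UNIV :: ('n \<Rightarrow> 'a) set). \<Sum>P \<in> Z. ?ind P Q y y')"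
        by (rule sum.cong[OF refl]) (rule swap3)
      also have "\<dots> \<le> (\<Sum>Q \<in> X. M * (q^2 - 1) * Gr)"
      proof (rule sum_mono)
        fix Q assume Q: "Q \<in> X"
        have QA: "Q \<in> affine_planes" using Q unfolding X_def All_def by simp
        have ZA': "Z \<subseteq> affine_planes" using ZA unfolding All_def .
        have z0: "\<forall>P\<in>Z. \<forall>f\<in>low_deg d P. A P f = 0" unfolding Z_def by simp
        have "(\<Sum>y \<in> (UNIV :: ('n \<Rightarrow> 'a) set). \<Sum>y' \<in> (UNIV :: ('n \<Rightarrow> 'a) set). \<Sum>P \<in> Z. ?ind P Q y y')
            \<le> real (card {y \<in> Q. \<forall>a. mu d A Q y a = 0}) * (q^2 - 1) * Gr"
          unfolding q_def by (rule UB[OF assms(4) QA ZA' z0 Grb Gr0])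
        also have "\<dots> \<le> M * (q^2 - 1) * Gr"
        proof -
          have "1 * 1 \<le> q * q" using q2 by (intro mult_mono) auto
          then have "1 \<le> q^2" by (simp add: power2_eq_square)
          then show ?thesis using BX[OF Q] Gr0 by (intro mult_right_mono) auto
        qed
        finally show "(\<Sum>y \<in> (UNIV :: ('n \<Rightarrow> 'a) set). \<Sum>y' \<in> (UNIV :: ('n \<Rightarrow> 'a) set). \<Sum>P \<in> Z. ?ind P Q y y')
            \<le> M * (q^2 - 1) * Gr" .
      qed
      also have "\<dots> = real (card X) * (M * (q^2 - 1) * Gr)" by simp
      finally show ?thesis .
    qed
    have c1: "real (card X) * N \<le> real (card All) * q^2"
    proof -
      have "card X * card (UNIV :: ('n \<Rightarrow> 'a) set) \<le> card All * card (UNIV :: 'a set)^2"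
        unfolding X_def All_def by (rule C1)
      then have "real (card X * card (UNIV :: ('n \<Rightarrow> 'a) set)) \<le> real (card All * card (UNIV :: 'a set)^2)"
        by (simp only: of_nat_le_iff)
      then show ?thesis unfolding N_def q_def by simp
    qed
    have al: "0 < real (card All)"
    proof -
      have "All \<noteq> {}" using P0(1) unfolding All_def by blast
      then show ?thesis using finA by (simp add: card_gt_0_iff)
    qed
    show ?thesis
      by (rule final_arith[OF q2 u1 lt order_trans[OF low up] c1 GrE M_def al]) auto
  qed
  show ?thesis unfolding cq using main[unfolded Z_def All_def] .
qed

end
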